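(* Let $\mathscr{C}$ be a 2-complex containing no 3-book, and let $k$ be the number of singular nodes of $\mathscr{C}$. Let $G$ be a graph and let $G'$ be the graph obtained from $G$ by subdividing each edge exactly $k$ times. Then $G$ has an embedding into $\mathscr{C}$ if and only if $G'$ has an embedding $\Gamma'$ into $\mathscr{C}$ such that every singular node of $\mathscr{C}$ lying in the image of $\Gamma'$ is the image under $\Gamma'$ of a vertex of $G'$.
   Context: A 2-complex is an abstract simplicial complex of dimension at most two (nodes, segments, triangles), identified with its geometric realization. A 2-complex contains a 3-book if some three distinct triangles share a common segment. Let $p$ be a node. A cone at $p$ is a cyclic sequence of triangles $t_1,\dots,t_k,t_{k+1}=t_1$ all incident to $p$ such that for each $i$, $t_i$ and $t_{i+1}$ share a segment incident with $p$, and any other pair of these triangles has only $p$ in common. A corner at $p$ is an inclusionwise maximal (non-cyclic) sequence of triangles $t_1,\dots,t_k$ all incident to $p$ such that for $i=1,\dots,k-1$, $t_i$ and $t_{i+1}$ share a segment incident with $p$, and any other pair has only $p$ in common. An isolated segment at $p$ is a segment incident to $p$ but to no triangle. If $\mathscr{C}$ has no 3-book, the segments and triangles incident with $p$ are uniquely partitioned into cones, corners and isolated segments; $p$ is regular if all of them form a single cone or a single corner, and singular otherwise. Graphs are finite, may have loops and multiple edges; embeddings are injective continuous maps. *)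

theory Defs
  imports "HOL-Analysis.Analysis"
begin

definition two_complex :: "'v set set \<Rightarrow> bool" where
  "two_complex C \<longleftrightarrow> finite C \<and>
     (\<forall>s\<in>C. finite s \<and> s \<noteq> {} \<and> card s \<le> 3) \<and>
     (\<forall>s\<in>C. \<forall>t. t \<subseteq> s \<and> t \<noteq> {} \<longrightarrow> t \<in> C)"

definition nodes :: "'v set set \<Rightarrow> 'v set" where
  "nodes C = {p. {p} \<in> C}"

definition segments :: "'v set set \<Rightarrow> 'v set set" where
  "segments C = {s\<in>C. card s = 2}"

definition triangles :: "'v set set \<Rightarrow> 'v set set" where
  "triangles C = {t\<in>C. card t = 3}"

definition has_3book :: "'v set set \<Rightarrow> bool" where
  "has_3book C \<longleftrightarrow> (\<exists>s\<in>segments C. \<exists>t1 t2 t3.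
      t1 \<in> triangles C \<and> t2 \<in> triangles C \<and> t3 \<in> triangles C \<and>
      s \<subseteq> t1 \<and> s \<subseteq> t2 \<and> s \<subseteq> t3 \<and> t1 \<noteq> t2 \<and> t1 \<noteq> t3 \<and> t2 \<noteq> t3)"

text \<open>Geometric realization: barycentric coordinate functions whose support is a simplex.
The ambient space \<open>'v \<Rightarrow> real\<close> carries the product topology.\<close>
definition realization :: "'v set set \<Rightarrow> ('v \<Rightarrow> real) set" where
  "realization C = {x. (\<forall>v. 0 \<le> x v) \<and> {v. x v \<noteq> 0} \<in> C \<and> sum x {v. x v \<noteq> 0} = 1}"

definition node_point :: "'v \<Rightarrow> ('v \<Rightarrow> real)" where
  "node_point p = (\<lambda>v. if v = p then 1 else 0)"

definition share_seg_at :: "'v \<Rightarrow> 'v set \<Rightarrow> 'v set \<Rightarrow> bool" where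
  "share_seg_at p t t' \<longleftrightarrow> p \<in> t \<inter> t' \<and> card (t \<inter> t') = 2"

definition is_cone_at :: "'v set set \<Rightarrow> 'v \<Rightarrow> 'v set list \<Rightarrow> bool" where
  "is_cone_at C p ts \<longleftrightarrow> length ts \<ge> 3 \<and> distinct ts \<and>
     (\<forall>t\<in>set ts. t \<in> triangles C \<and> p \<in> t) \<and>
     (\<forall>i<length ts. share_seg_at p (ts ! i) (ts ! ((i + 1) mod length ts))) \<and>
     (\<forall>i<length ts. \<forall>j<length ts. i \<noteq> j \<and> j \<noteq> (i + 1) mod length ts \<and>
         i \<noteq> (j + 1) mod length ts \<longrightarrow> ts ! i \<inter> ts ! j = {p})"

definition is_chain_at :: "'v set set \<Rightarrow> 'v \<Rightarrow> 'v set list \<Rightarrow> bool" where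
  "is_chain_at C p ts \<longleftrightarrow> length ts \<ge> 1 \<and> distinct ts \<and>
     (\<forall>t\<in>set ts. t \<in> triangles C \<and> p \<in> t) \<and>
     (\<forall>i. i + 1 < length ts \<longrightarrow> share_seg_at p (ts ! i) (ts ! (i + 1))) \<and>
     (\<forall>i<length ts. \<forall>j<length ts. i \<noteq> j \<and> j \<noteq> i + 1 \<and> i \<noteq> j + 1
         \<longrightarrow> ts ! i \<inter> ts ! j = {p})"

definition is_corner_at :: "'v set set \<Rightarrow> 'v \<Rightarrow> 'v set list \<Rightarrow> bool" where
  "is_corner_at C p ts \<longleftrightarrow> is_chain_at C p ts \<and>
     \<not> (\<exists>us. is_chain_at C p us \<and> set ts \<subset> set us)"

definition isolated_segment_at :: "'v set set \<Rightarrow> 'v \<Rightarrow> 'v set \<Rightarrow> bool" where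
  "isolated_segment_at C p s \<longleftrightarrow> s \<in> segments C \<and> p \<in> s \<and>
     \<not> (\<exists>t\<in>triangles C. s \<subseteq> t)"

text \<open>A node is regular iff all segments and triangles incident with it form a single
cone or a single corner (i.e. the partition into cones, corners and isolated segments
consists of exactly one part, which is a cone or a corner).\<close>
definition regular_node :: "'v set set \<Rightarrow> 'v \<Rightarrow> bool" where
  "regular_node C p \<longleftrightarrow> p \<in> nodes C \<and>
     (\<exists>ts. (is_cone_at C p ts \<or> is_corner_at C p ts) \<and>
        set ts = {t\<in>triangles C. p \<in> t} \<and>
        (\<forall>s\<in>segments C. p \<in> s \<longrightarrow> (\<exists>t\<in>set ts. s \<subseteq> t)))"

definition singular_nodes :: "'v set set \<Rightarrow> 'v set" where
  "singular_nodes C = {p\<in>nodes C. \<not> regular_node C p}"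

definition graph :: "'a set \<Rightarrow> 'e set \<Rightarrow> ('e \<Rightarrow> 'a \<times> 'a) \<Rightarrow> bool" where
  "graph V E ends \<longleftrightarrow> finite V \<and> finite E \<and> (\<forall>e\<in>E. fst (ends e) \<in> V \<and> snd (ends e) \<in> V)"

text \<open>An embedding (injective continuous map of the topological realization of the
graph) into a space \<open>X\<close>, given by its restriction to vertices (\<open>\<phi>\<close>) and to the closed
edges (\<open>\<gamma> e\<close> parametrized by [0,1]).\<close>
definition graph_embedding ::
  "'a set \<Rightarrow> 'e set \<Rightarrow> ('e \<Rightarrow> 'a \<times> 'a) \<Rightarrow> ('x::topological_space) set
     \<Rightarrow> ('a \<Rightarrow> 'x) \<Rightarrow> ('e \<Rightarrow> real \<Rightarrow> 'x) \<Rightarrow> bool" where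
  "graph_embedding V E ends X \<phi> \<gamma> \<longleftrightarrow>
     \<phi> ` V \<subseteq> X \<and> inj_on \<phi> V \<and>
     (\<forall>e\<in>E. simple_path (\<gamma> e) \<and> path_image (\<gamma> e) \<subseteq> X \<and>
        pathstart (\<gamma> e) = \<phi> (fst (ends e)) \<and> pathfinish (\<gamma> e) = \<phi> (snd (ends e)) \<and>
        \<gamma> e ` {0<..<1} \<inter> \<phi> ` V = {}) \<and>
     (\<forall>e\<in>E. \<forall>e'\<in>E. e \<noteq> e' \<longrightarrow> \<gamma> e ` {0<..<1} \<inter> \<gamma> e' ` {0<..<1} = {})"

definition graph_image ::
  "'a set \<Rightarrow> 'e set \<Rightarrow> ('a \<Rightarrow> 'x::topological_space) \<Rightarrow> ('e \<Rightarrow> real \<Rightarrow> 'x) \<Rightarrow> 'x set" where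
  "graph_image V E \<phi> \<gamma> = \<phi> ` V \<union> (\<Union>e\<in>E. path_image (\<gamma> e))"

text \<open>New vertices: \<open>Inl a\<close> for old vertices, \<open>Inr (e,i)\<close>, \<open>1 \<le> i \<le> k\<close>, for the
subdivision vertices of edge \<open>e\<close>; edge \<open>e\<close> becomes the path of edges \<open>(e,0),\<dots>,(e,k)\<close>.\<close>
definition subdiv_V :: "'a set \<Rightarrow> 'e set \<Rightarrow> nat \<Rightarrow> ('a + 'e \<times> nat) set" where
  "subdiv_V V E k = Inl ` V \<union> Inr ` (E \<times> {1..k})"

definition subdiv_E :: "'e set \<Rightarrow> nat \<Rightarrow> ('e \<times> nat) set" where
  "subdiv_E E k = E \<times> {0..k}"

definition subdiv_pt :: "('e \<Rightarrow> 'a \<times> 'a) \<Rightarrow> nat \<Rightarrow> 'e \<Rightarrow> nat \<Rightarrow> 'a + 'e \<times> nat" where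
  "subdiv_pt ends k e i =
     (if i = 0 then Inl (fst (ends e)) else if i = k + 1 then Inl (snd (ends e)) else Inr (e, i))"

definition subdiv_ends :: "('e \<Rightarrow> 'a \<times> 'a) \<Rightarrow> nat \<Rightarrow> 'e \<times> nat \<Rightarrow> ('a + 'e \<times> nat) \<times> ('a + 'e \<times> nat)" where
  "subdiv_ends ends k = (\<lambda>(e, j). (subdiv_pt ends k e j, subdiv_pt ends k e (j + 1)))"

end

theory Submission
  imports Defs
begin


definition sp :: "real \<Rightarrow> real \<Rightarrow> (real \<Rightarrow> 'x) \<Rightarrow> real \<Rightarrow> 'x" where
  "sp a b g = (\<lambda>x. g ((b - a) * x + a))"

lemma sp_start[simp]: "pathstart (sp a b g) = g a" by (simp add: sp_def pathstart_def)
lemma sp_finish[simp]: "pathfinish (sp a b g) = g b" by (simp add: sp_def pathfinish_def)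

lemma sp_path:
  fixes g :: "real \<Rightarrow> 'x::topological_space"
  assumes "path g" "0 \<le> a" "a < b" "b \<le> 1"
  shows "path (sp a b g)"
proof -
  have c: "continuous_on {0..1} (\<lambda>x::real. (b - a) * x + a)" by (intro continuous_intros)
  have im: "(\<lambda>x::real. (b - a) * x + a) ` {0..1} \<subseteq> {0..1}"
  proof
    fix y assume "y \<in> (\<lambda>x::real. (b - a) * x + a) ` {0..1}"
    then obtain x where x: "x \<in> {0..1}" "y = (b - a) * x + a" by auto
    have "(b-a)*x \<le> (b-a)*1" using x assms by (intro mult_left_mono) auto
    moreover have "0 \<le> (b-a)*x" using x assms by auto
    ultimately show "y \<in> {0..1}" unfolding x(2) atLeastAtMost_iff using assms mult_1_right[of "b-a"] by linarith
  qed
  have "continuous_on {0..1} (g \<circ> (\<lambda>x::real. (b - a) * x + a))"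
    using continuous_on_compose[OF c] continuous_on_subset[OF assms(1)[unfolded path_def] im] by blast
  then show ?thesis by (simp add: path_def sp_def o_def)
qed

lemma sp_image_closed:
  assumes "a < b"
  shows "sp a b g ` {0..1} = g ` {a..b}"
proof
  show "sp a b g ` {0..1} \<subseteq> g ` {a..b}"
  proof
    fix y assume "y \<in> sp a b g ` {0..1}"
    then obtain x where x: "x \<in> {0..1}" "y = g ((b - a) * x + a)" by (auto simp: sp_def)
    have "(b-a)*x \<le> (b-a)*1" using x assms by (intro mult_left_mono) auto
    moreover have "0 \<le> (b-a)*x" using x assms by auto
    ultimately have "(b - a) * x + a \<in> {a..b}" by simp
    then show "y \<in> g ` {a..b}" using x by auto
  qed
next
  show "g ` {a..b} \<subseteq> sp a b g ` {0..1}"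
  proof
    fix y assume "y \<in> g ` {a..b}"
    then obtain s where s: "s \<in> {a..b}" "y = g s" by auto
    let ?x = "(s - a) / (b - a)"
    have "(b - a) * ?x + a = s" using assms by (simp add: field_simps)
    moreover have "?x \<in> {0..1}" using s assms by (auto simp: field_simps)
    ultimately have "sp a b g ?x = y" "?x \<in> {0..1}" using s by (auto simp: sp_def)
    then show "y \<in> sp a b g ` {0..1}" by (metis rev_image_eqI)
  qed
qed

lemma sp_image_open:
  assumes "a < b"
  shows "sp a b g ` {0<..<1} = g ` {a<..<b}"
proof
  show "sp a b g ` {0<..<1} \<subseteq> g ` {a<..<b}"
  proof
    fix y assume "y \<in> sp a b g ` {0<..<1}"
    then obtain x where x: "x \<in> {0<..<1}" "y = g ((b - a) * x + a)" by (auto simp: sp_def)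
    have "(b-a)*x < (b-a)*1" using x assms by (intro mult_strict_left_mono) auto
    moreover have "0 < (b-a)*x" using x assms by auto
    ultimately show "y \<in> g ` {a<..<b}" using x by auto
  qed
next
  show "g ` {a<..<b} \<subseteq> sp a b g ` {0<..<1}"
  proof
    fix y assume "y \<in> g ` {a<..<b}"
    then obtain s where s: "s \<in> {a<..<b}" "y = g s" by auto
    let ?x = "(s - a) / (b - a)"
    have "(b - a) * ?x + a = s" using assms by (simp add: field_simps)
    moreover have "?x \<in> {0<..<1}" using s assms by (auto simp: field_simps)
    ultimately have "sp a b g ?x = y" "?x \<in> {0<..<1}" using s by (auto simp: sp_def)
    then show "y \<in> sp a b g ` {0<..<1}" by (metis rev_image_eqI)
  qed
qed

lemma sp_simple:
  fixes g :: "real \<Rightarrow> 'x::topological_space"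
  assumes "simple_path g" "0 \<le> a" "a < b" "b \<le> 1"
  shows "simple_path (sp a b g)"
  unfolding simple_path_def
proof
  show "path (sp a b g)" using sp_path assms simple_path_imp_path by blast
  show "loop_free (sp a b g)" unfolding loop_free_def
  proof (intro ballI impI)
    fix x y :: real assume x: "x \<in> {0..1}" and y: "y \<in> {0..1}" and eq: "sp a b g x = sp a b g y"
    let ?f = "\<lambda>x::real. (b - a) * x + a"
    have r: "\<And>x. x \<in> {0..1} \<Longrightarrow> ?f x \<in> {0..1}"
    proof -
      fix x :: real assume x: "x \<in> {0..1}"
      have "(b-a)*x \<le> (b-a)*1" using x assms by (intro mult_left_mono) auto
      moreover have "0 \<le> (b-a)*x" using x assms by auto
      ultimately show "?f x \<in> {0..1}" unfolding atLeastAtMost_iff using assms mult_1_right[of "b-a"] by linarith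
    qed
    have "?f x = ?f y \<or> ?f x = 0 \<and> ?f y = 1 \<or> ?f x = 1 \<and> ?f y = 0"
      using assms(1) r[OF x] r[OF y] eq unfolding simple_path_def loop_free_def sp_def by blast
    moreover have e: "\<And>u v. u \<in> {0..1} \<Longrightarrow> v \<in> {0..1} \<Longrightarrow> ?f u = ?f v \<Longrightarrow> u = v"
      using assms by auto
    moreover have z: "\<And>u. u \<in> {0..1} \<Longrightarrow> ?f u = 0 \<Longrightarrow> u = 0"
    proof -
      fix u :: real assume u: "u \<in> {0..1}" "?f u = 0"
      have "0 \<le> (b-a)*u" using u assms by auto
      then have "(b-a)*u = 0" using u assms by linarith
      then show "u = 0" using assms by auto
    qed
    moreover have o: "\<And>u. u \<in> {0..1} \<Longrightarrow> ?f u = 1 \<Longrightarrow> u = 1"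
    proof -
      fix u :: real assume u: "u \<in> {0..1}" "?f u = 1"
      have "(b-a)*u \<le> (b-a)*1" using u assms by (intro mult_left_mono) auto
      then have "(b-a)*u = (b-a)*1" using u assms mult_1_right[of "b-a"] by linarith
      then show "u = 1" using assms by auto
    qed
    ultimately show "x = y \<or> x = 0 \<and> y = 1 \<or> x = 1 \<and> y = 0"
      using x y by blast
  qed
qed

lemma join_interior:
  assumes "pathfinish g1 = pathstart g2"
  shows "(g1 +++ g2) ` {0<..<1} = g1 ` {0<..<1} \<union> {g2 0} \<union> g2 ` {0<..<1}"
proof
  have g: "g1 1 = g2 0" using assms by (simp add: pathfinish_def pathstart_def)
  show "(g1 +++ g2) ` {0<..<1} \<subseteq> g1 ` {0<..<1} \<union> {g2 0} \<union> g2 ` {0<..<1}"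
  proof
    fix y assume "y \<in> (g1 +++ g2) ` {0<..<1}"
    then obtain x :: real where x: "0 < x" "x < 1" "y = (g1 +++ g2) x" by auto
    show "y \<in> g1 ` {0<..<1} \<union> {g2 0} \<union> g2 ` {0<..<1}"
    proof (cases "x \<le> 1/2")
      case True
      then have "y = g1 (2*x)" using x by (simp add: joinpaths_def)
      then show ?thesis using x True g by (cases "x = 1/2") auto
    next
      case False
      then have "y = g2 (2*x - 1)" using x by (simp add: joinpaths_def)
      then show ?thesis using x False by auto
    qed
  qed
next
  have g: "g1 1 = g2 0" using assms by (simp add: pathfinish_def pathstart_def)
  show "g1 ` {0<..<1} \<union> {g2 0} \<union> g2 ` {0<..<1} \<subseteq> (g1 +++ g2) ` {0<..<1}"
  proof (intro Un_least subsetI)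
    fix y assume "y \<in> g1 ` {0<..<1}"
    then obtain s where s: "0 < s" "s < 1" "y = g1 s" by auto
    then have "(g1 +++ g2) (s/2) = y" by (simp add: joinpaths_def)
    moreover have "s/2 \<in> {0<..<1}" using s by auto
    ultimately show "y \<in> (g1 +++ g2) ` {0<..<1}" by force
  next
    fix y assume "y \<in> {g2 0}"
    then have "(g1 +++ g2) (1/2) = y" using g by (simp add: joinpaths_def)
    moreover have "(1/2::real) \<in> {0<..<1}" by auto
    ultimately show "y \<in> (g1 +++ g2) ` {0<..<1}" by force
  next
    fix y assume "y \<in> g2 ` {0<..<1}"
    then obtain s where s: "0 < s" "s < 1" "y = g2 s" by auto
    then have "(g1 +++ g2) ((s+1)/2) = y" by (simp add: joinpaths_def field_simps)
    moreover have "(s+1)/2 \<in> {0<..<1}" using s by auto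
    ultimately show "y \<in> (g1 +++ g2) ` {0<..<1}" by force
  qed
qed

lemma path_image_split:
  "path_image g = g ` {0<..<1} \<union> {pathstart g, pathfinish g}"
  unfolding path_image_def pathstart_def pathfinish_def
  by (auto simp: image_iff) (metis atLeastAtMost_iff greaterThanLessThan_iff order_le_less)

lemma join_simple:
  assumes "arc g1" "arc g2" "pathfinish g1 = pathstart g2"
    and "path_image g1 \<inter> path_image g2 \<subseteq> {pathstart g1, pathstart g2}"
    and "pathstart g1 \<in> path_image g2 \<Longrightarrow> pathstart g1 = pathfinish g2"
  shows "simple_path (g1 +++ g2) \<and> (pathstart g1 \<noteq> pathfinish g2 \<longrightarrow> arc (g1 +++ g2))"
proof (cases "pathstart g1 = pathfinish g2")
  case True
  then show ?thesis using simple_path_join_loop[OF assms(1-3)] assms(4) by auto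
next
  case False
  then have "path_image g1 \<inter> path_image g2 \<subseteq> {pathstart g2}" using assms(4,5) by auto
  then have "arc (g1 +++ g2)" using arc_join[OF assms(1-3)] by blast
  then show ?thesis using arc_imp_simple_path by blast
qed

lemma choose_ts:
  fixes S :: "real set"
  assumes "finite S" "S \<subseteq> {0<..<1}" "card S \<le> k"
  shows "\<exists>t. strict_mono t \<and> t 0 = 0 \<and> t (Suc k) = 1 \<and> S \<subseteq> t ` {1..k}"
proof -
  have "infinite ({0<..<1::real} - S)" using assms(1) by (simp add: Diff_infinite_finite)
  then obtain B where B: "B \<subseteq> {0<..<1} - S" "finite B" "card B = k - card S"
    using infinite_arbitrarily_large by blast
  define T where "T = S \<union> B"
  have Tfin: "finite T" and Tsub: "T \<subseteq> {0<..<1}" using B assms by (auto simp: T_def)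
  have cT: "card T = k" using B assms unfolding T_def by (subst card_Un_disjoint) auto
  define xs where "xs = sorted_list_of_set T"
  have lxs: "length xs = k" using cT Tfin by (simp add: xs_def)
  have sxs: "sorted_wrt (<) xs" by (simp add: xs_def)
  have setxs: "set xs = T" using Tfin by (simp add: xs_def)
  have xs01: "\<And>i. i < k \<Longrightarrow> xs ! i \<in> {0<..<1}" using setxs Tsub lxs nth_mem by blast
  define t where "t = (\<lambda>i. if i = 0 then 0 else if i \<le> k then xs ! (i - 1) else real i - real k)"
  have "\<forall>n. t n < t (Suc n)"
  proof
    fix n
    consider "n = 0" "k = 0" | "n = 0" "k \<ge> 1" | "1 \<le> n" "n < k" | "n = k" "n \<ge> 1" | "n > k" by linarith
    then show "t n < t (Suc n)"
    proof cases
      case 1 then show ?thesis by (simp add: t_def)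
    next
      case 2 then show ?thesis using xs01[of 0] by (simp add: t_def)
    next
      case 3 then show ?thesis using sorted_wrt_nth_less[OF sxs, of "n-1" n] lxs by (simp add: t_def)
    next
      case 4 then show ?thesis using xs01[of "n-1"] by (simp add: t_def)
    next
      case 5 then show ?thesis by (simp add: t_def)
    qed
  qed
  then have "strict_mono t" by (simp add: strict_mono_Suc_iff)
  moreover have "t 0 = 0" "t (Suc k) = 1" by (auto simp: t_def)
  moreover have "S \<subseteq> t ` {1..k}"
  proof
    fix s assume "s \<in> S"
    then have "s \<in> set xs" using setxs T_def by auto
    then obtain j where j: "j < k" "xs ! j = s" using lxs by (auto simp: in_set_conv_nth)
    then have "t (Suc j) = s" by (simp add: t_def)
    then show "s \<in> t ` {1..k}" using j by force
  qed
  ultimately show ?thesis by blast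
qed



lemma subdiv_pt_simps:
  "subdiv_pt ends k e 0 = Inl (fst (ends e))"
  "subdiv_pt ends k e (Suc k) = Inl (snd (ends e))"
  "1 \<le> i \<Longrightarrow> i \<le> k \<Longrightarrow> subdiv_pt ends k e i = Inr (e, i)"
  by (auto simp: subdiv_pt_def)

lemma forward:
  fixes \<phi> :: "'a \<Rightarrow> 'x::topological_space" and Q :: "'x set"
  assumes G: "graph V E ends" and emb: "graph_embedding V E ends X \<phi> \<gamma>"
    and Qf: "finite Q" and Qk: "card Q \<le> k"
  shows "\<exists>\<phi>' \<gamma>'. graph_embedding (subdiv_V V E k) (subdiv_E E k) (subdiv_ends ends k) X \<phi>' \<gamma>' \<and>
            (\<forall>q\<in>Q. q \<in> graph_image (subdiv_V V E k) (subdiv_E E k) \<phi>' \<gamma>' \<longrightarrow>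
               q \<in> \<phi>' ` subdiv_V V E k)"
proof -
  have VX: "\<phi> ` V \<subseteq> X" and injV: "inj_on \<phi> V"
    and sp: "\<And>e. e \<in> E \<Longrightarrow> simple_path (\<gamma> e)"
    and piX: "\<And>e. e \<in> E \<Longrightarrow> path_image (\<gamma> e) \<subseteq> X"
    and st: "\<And>e. e \<in> E \<Longrightarrow> \<gamma> e 0 = \<phi> (fst (ends e))"
    and fi: "\<And>e. e \<in> E \<Longrightarrow> \<gamma> e 1 = \<phi> (snd (ends e))"
    and IV: "\<And>e. e \<in> E \<Longrightarrow> \<gamma> e ` {0<..<1} \<inter> \<phi> ` V = {}"
    and II: "\<And>e e'. e \<in> E \<Longrightarrow> e' \<in> E \<Longrightarrow> e \<noteq> e' \<Longrightarrow> \<gamma> e ` {0<..<1} \<inter> \<gamma> e' ` {0<..<1} = {}"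
  proof -
    note E = emb[unfolded graph_embedding_def]
    have E3: "\<forall>e\<in>E. simple_path (\<gamma> e) \<and> path_image (\<gamma> e) \<subseteq> X \<and>
        pathstart (\<gamma> e) = \<phi> (fst (ends e)) \<and> pathfinish (\<gamma> e) = \<phi> (snd (ends e)) \<and>
        \<gamma> e ` {0<..<1} \<inter> \<phi> ` V = {}" using E by (elim conjE)
    show "\<phi> ` V \<subseteq> X" using E by (elim conjE)
    show "inj_on \<phi> V" using E by (elim conjE)
    show "\<And>e. e \<in> E \<Longrightarrow> simple_path (\<gamma> e)" using E3 by blast
    show "\<And>e. e \<in> E \<Longrightarrow> path_image (\<gamma> e) \<subseteq> X" using E3 by blast
    show "\<And>e. e \<in> E \<Longrightarrow> \<gamma> e 0 = \<phi> (fst (ends e))" using E3 unfolding pathstart_def by blast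
    show "\<And>e. e \<in> E \<Longrightarrow> \<gamma> e 1 = \<phi> (snd (ends e))" using E3 unfolding pathfinish_def by blast
    show "\<And>e. e \<in> E \<Longrightarrow> \<gamma> e ` {0<..<1} \<inter> \<phi> ` V = {}" using E3 by blast
    show "\<And>e e'. e \<in> E \<Longrightarrow> e' \<in> E \<Longrightarrow> e \<noteq> e' \<Longrightarrow> \<gamma> e ` {0<..<1} \<inter> \<gamma> e' ` {0<..<1} = {}"
    proof -
      fix e e' assume "e \<in> E" "e' \<in> E" "e \<noteq> e'"
      moreover have "\<forall>e\<in>E. \<forall>e'\<in>E. e \<noteq> e' \<longrightarrow> \<gamma> e ` {0<..<1} \<inter> \<gamma> e' ` {0<..<1} = {}"
        using E by (elim conjE)
      ultimately show "\<gamma> e ` {0<..<1} \<inter> \<gamma> e' ` {0<..<1} = {}" by blast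
    qed
  qed
  have endsV: "\<And>e. e \<in> E \<Longrightarrow> fst (ends e) \<in> V \<and> snd (ends e) \<in> V" using G by (auto simp: graph_def)
  have inj01: "\<And>e s s'. e \<in> E \<Longrightarrow> s \<in> {0<..<1} \<Longrightarrow> s' \<in> {0..1} \<Longrightarrow> \<gamma> e s = \<gamma> e s' \<Longrightarrow> s = s'"
  proof -
    fix e s s' assume "e \<in> E" "s \<in> {0<..<1}" "s' \<in> {0..1}" "\<gamma> e s = \<gamma> e s'"
    moreover have "s \<in> {0..1}" using \<open>s \<in> {0<..<1}\<close> by auto
    ultimately have "s = s' \<or> s = 0 \<and> s' = 1 \<or> s = 1 \<and> s' = 0"
      using sp[of e] unfolding simple_path_def loop_free_def by blast
    then show "s = s'" using \<open>s \<in> {0<..<1}\<close> by auto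
  qed
  define S where "S e = {s\<in>{0<..<1}. \<gamma> e s \<in> Q}" for e
  have "\<forall>e\<in>E. \<exists>t. strict_mono t \<and> t 0 = 0 \<and> t (Suc k) = 1 \<and> S e \<subseteq> t ` {1..k}"
  proof
    fix e assume e: "e \<in> E"
    have inj: "inj_on (\<gamma> e) (S e)" unfolding inj_on_def S_def using inj01[OF e] by auto
    have sub: "\<gamma> e ` S e \<subseteq> Q" by (auto simp: S_def)
    have "finite (\<gamma> e ` S e)" using sub Qf finite_subset by blast
    then have fin: "finite (S e)" using finite_imageD inj by blast
    have "card (S e) \<le> k" using card_inj_on_le[OF inj sub Qf] Qk by linarith
    moreover have "S e \<subseteq> {0<..<1}" unfolding S_def by blast
    ultimately show "\<exists>t. strict_mono t \<and> t 0 = 0 \<and> t (Suc k) = 1 \<and> S e \<subseteq> t ` {1..k}"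
      using choose_ts[OF fin] by blast
  qed
  then obtain t where t0: "\<forall>e\<in>E. strict_mono (t e) \<and> t e 0 = 0 \<and> t e (Suc k) = 1 \<and> S e \<subseteq> t e ` {1..k}"
    by (rule bchoice[THEN exE])
  then have t: "\<And>e. e \<in> E \<Longrightarrow> strict_mono (t e) \<and> t e 0 = 0 \<and> t e (Suc k) = 1 \<and> S e \<subseteq> t e ` {1..k}"
    by blast
  have tlt: "\<And>e i j. e \<in> E \<Longrightarrow> i < j \<Longrightarrow> t e i < t e j"
  proof -
    fix e and i j :: nat assume "e \<in> E" "i < j"
    then show "t e i < t e j" using t[of e] strict_monoD[of "t e" i j] by blast
  qed
  have tle: "\<And>e i j. e \<in> E \<Longrightarrow> i \<le> j \<Longrightarrow> t e i \<le> t e j"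
  proof -
    fix e and i j :: nat assume "e \<in> E" "i \<le> j"
    then show "t e i \<le> t e j" using tlt[of e i j] by (cases "i = j") auto
  qed
  have t01: "\<And>e i. e \<in> E \<Longrightarrow> i \<le> Suc k \<Longrightarrow> t e i \<in> {0..1}"
  proof -
    fix e and i :: nat assume "e \<in> E" "i \<le> Suc k"
    then have "t e 0 \<le> t e i" "t e i \<le> t e (Suc k)" using tle[of e 0 i] tle[of e i "Suc k"] by auto
    moreover have "t e 0 = 0" "t e (Suc k) = 1" using t[OF \<open>e \<in> E\<close>] by blast+
    ultimately show "t e i \<in> {0..1}" by simp
  qed
  have tin: "\<And>e i. e \<in> E \<Longrightarrow> 1 \<le> i \<Longrightarrow> i \<le> k \<Longrightarrow> t e i \<in> {0<..<1}"
  proof -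
    fix e and i :: nat assume "e \<in> E" "1 \<le> i" "i \<le> k"
    then have "t e 0 < t e i" "t e i < t e (Suc k)" using tlt[of e 0 i] tlt[of e i "Suc k"] by auto
    moreover have "t e 0 = 0" "t e (Suc k) = 1" using t[OF \<open>e \<in> E\<close>] by blast+
    ultimately show "t e i \<in> {0<..<1}" by simp
  qed
  define \<phi>' where "\<phi>' = case_sum \<phi> (\<lambda>(e,i). \<gamma> e (t e i))"
  define \<gamma>' where "\<gamma>' = (\<lambda>(e,j). sp (t e j) (t e (Suc j)) (\<gamma> e))"
  let ?V = "subdiv_V V E k" and ?E = "subdiv_E E k" and ?ends = "subdiv_ends ends k"
  have ptv: "\<And>e j. e \<in> E \<Longrightarrow> j \<le> Suc k \<Longrightarrow> \<phi>' (subdiv_pt ends k e j) = \<gamma> e (t e j)"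
  proof -
    fix e j assume e: "e \<in> E" and j: "j \<le> Suc k"
    have t0: "t e 0 = 0" and t1: "t e (Suc k) = 1" using t[OF e] by blast+
    consider "j = 0" | "j = Suc k" | "1 \<le> j" "j \<le> k" using j by linarith
    then show "\<phi>' (subdiv_pt ends k e j) = \<gamma> e (t e j)"
    proof cases
      case 1 then show ?thesis using st[OF e] t0 by (simp add: subdiv_pt_simps \<phi>'_def)
    next
      case 2 then show ?thesis using fi[OF e] t1 by (simp add: subdiv_pt_simps \<phi>'_def)
    next
      case 3 then show ?thesis by (simp add: subdiv_pt_simps \<phi>'_def)
    qed
  qed
  have Inr_int: "\<And>e i. (e, i) \<in> E \<times> {1..k} \<Longrightarrow> \<phi>' (Inr (e, i)) \<in> \<gamma> e ` {0<..<1}"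
  proof -
    fix e i assume "(e, i) \<in> E \<times> {1..k}"
    then have "t e i \<in> {0<..<1}" using tin[of e i] by auto
    then show "\<phi>' (Inr (e, i)) \<in> \<gamma> e ` {0<..<1}" by (simp add: \<phi>'_def)
  qed
  have Inr_eq: "\<And>e i. \<phi>' (Inr (e, i)) = \<gamma> e (t e i)" by (simp add: \<phi>'_def)
  have VX': "\<phi>' ` ?V \<subseteq> X"
  proof
    fix y assume "y \<in> \<phi>' ` ?V"
    then consider a where "a \<in> V" "y = \<phi> a" | e i where "e \<in> E" "i \<in> {1..k}" "y = \<gamma> e (t e i)"
      by (auto simp: subdiv_V_def \<phi>'_def)
    then show "y \<in> X"
    proof cases
      case 1 then show ?thesis using VX by auto
    next
      case 2
      then have "y \<in> path_image (\<gamma> e)" using t01[of e i] by (auto simp: path_image_def)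
      then show ?thesis using piX[OF 2(1)] by blast
    qed
  qed
  have inj': "inj_on \<phi>' ?V"
  proof (rule inj_onI)
    fix x y assume x: "x \<in> ?V" and y: "y \<in> ?V" and eq: "\<phi>' x = \<phi>' y"
    show "x = y"
    proof (cases x)
      case (Inl a)
      show ?thesis
      proof (cases y)
        case (Inl b) then show ?thesis using \<open>x = Inl a\<close> x y eq injV by (auto simp: subdiv_V_def \<phi>'_def inj_on_def)
      next
        case (Inr p)
        then obtain e i where p: "y = Inr (e,i)" "(e,i) \<in> E \<times> {1..k}" using y by (auto simp: subdiv_V_def)
        have "a \<in> V" using x Inl by (auto simp: subdiv_V_def)
        then have "\<phi>' x \<in> \<phi> ` V" using Inl by (simp add: \<phi>'_def)
        moreover have "\<phi>' x \<in> \<gamma> e ` {0<..<1}" using Inr_int[OF p(2)] eq p by simp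
        moreover have "e \<in> E" using p by auto
        ultimately show ?thesis using IV[of e] by blast
      qed
    next
      case (Inr p)
      then obtain e i where p: "x = Inr (e,i)" "(e,i) \<in> E \<times> {1..k}" using x by (auto simp: subdiv_V_def)
      show ?thesis
      proof (cases y)
        case (Inl b)
        have "b \<in> V" using y Inl by (auto simp: subdiv_V_def)
        then have "\<phi>' y \<in> \<phi> ` V" using Inl by (simp add: \<phi>'_def)
        moreover have "\<phi>' y \<in> \<gamma> e ` {0<..<1}" using Inr_int[OF p(2)] eq p by simp
        moreover have "e \<in> E" using p by auto
        ultimately show ?thesis using IV[of e] by blast
      next
        case (Inr q)
        then obtain e' i' where q: "y = Inr (e',i')" "(e',i') \<in> E \<times> {1..k}" using y by (auto simp: subdiv_V_def)
        show ?thesis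
        proof (cases "e = e'")
          case True
          then have "t e i = t e i'" using inj01[of e "t e i" "t e i'"] tin[of e i] tin[of e i'] p q eq Inr_eq by auto
          then have "i = i'" using t[of e] p strict_mono_eq[of "t e" i i'] by blast
          then show ?thesis using p q True by simp
        next
          case False
          then show ?thesis using II[of e e'] Inr_int[OF p(2)] Inr_int[OF q(2)] eq p q by auto
        qed
      qed
    qed
  qed
  have gint: "\<And>e j. e \<in> E \<Longrightarrow> j \<le> k \<Longrightarrow> \<gamma>' (e,j) ` {0<..<1} = \<gamma> e ` {t e j<..<t e (Suc j)}"
  proof -
    fix e and j :: nat assume "e \<in> E" "j \<le> k"
    then have "t e j < t e (Suc j)" using tlt[of e j "Suc j"] by simp
    then show "\<gamma>' (e,j) ` {0<..<1} = \<gamma> e ` {t e j<..<t e (Suc j)}"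
      unfolding \<gamma>'_def by (simp add: sp_image_open)
  qed
  have gcl: "\<And>e j. e \<in> E \<Longrightarrow> j \<le> k \<Longrightarrow> path_image (\<gamma>' (e,j)) = \<gamma> e ` {t e j..t e (Suc j)}"
  proof -
    fix e and j :: nat assume "e \<in> E" "j \<le> k"
    then have "t e j < t e (Suc j)" using tlt[of e j "Suc j"] by simp
    then show "path_image (\<gamma>' (e,j)) = \<gamma> e ` {t e j..t e (Suc j)}"
      unfolding \<gamma>'_def path_image_def by (simp add: sp_image_closed)
  qed
  have intsub: "\<And>e j. e \<in> E \<Longrightarrow> j \<le> k \<Longrightarrow> {t e j<..<t e (Suc j)} \<subseteq> {0<..<1}"
  proof -
    fix e and j :: nat assume "e \<in> E" "j \<le> k"
    then have "t e j \<in> {0..1}" "t e (Suc j) \<in> {0..1}" using t01[of e j] t01[of e "Suc j"] by auto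
    then show "{t e j<..<t e (Suc j)} \<subseteq> {0<..<1}" by auto
  qed
  have edges: "\<forall>x\<in>?E. simple_path (\<gamma>' x) \<and> path_image (\<gamma>' x) \<subseteq> X \<and>
        pathstart (\<gamma>' x) = \<phi>' (fst (?ends x)) \<and> pathfinish (\<gamma>' x) = \<phi>' (snd (?ends x)) \<and>
        \<gamma>' x ` {0<..<1} \<inter> \<phi>' ` ?V = {}"
  proof
    fix x assume "x \<in> ?E"
    then obtain e j where x: "x = (e,j)" "e \<in> E" "j \<le> k" by (auto simp: subdiv_E_def)
    have a: "simple_path (\<gamma>' x)" using x sp_simple[OF sp[of e], of "t e j" "t e (Suc j)"] t01[of e j] t01[of e "Suc j"] tlt[of e j "Suc j"]
      by (auto simp: \<gamma>'_def)
    have b: "path_image (\<gamma>' x) \<subseteq> X"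
    proof -
      have "path_image (\<gamma>' x) \<subseteq> \<gamma> e ` {0..1}" using gcl[OF x(2,3)] t01[of e j] t01[of e "Suc j"] x by auto
      then show ?thesis using piX[OF x(2)] by (auto simp: path_image_def)
    qed
    have c: "pathstart (\<gamma>' x) = \<phi>' (fst (?ends x))" "pathfinish (\<gamma>' x) = \<phi>' (snd (?ends x))"
      using x ptv[of e j] ptv[of e "Suc j"] by (auto simp: \<gamma>'_def subdiv_ends_def)
    have d: "\<gamma>' x ` {0<..<1} \<inter> \<phi>' ` ?V = {}"
    proof (rule ccontr)
      assume "\<gamma>' x ` {0<..<1} \<inter> \<phi>' ` ?V \<noteq> {}"
      then obtain s v where s: "s \<in> {t e j<..<t e (Suc j)}" and v: "v \<in> ?V" and eq: "\<gamma> e s = \<phi>' v"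
        using gint[OF x(2,3)] x by force
      have s01: "s \<in> {0<..<1}" using s intsub[OF x(2,3)] by auto
      show False
      proof (cases v)
        case (Inl a)
        then have "a \<in> V" using v by (auto simp: subdiv_V_def)
        then have "\<gamma> e s \<in> \<phi> ` V" using eq Inl by (simp add: \<phi>'_def)
        moreover have "\<gamma> e s \<in> \<gamma> e ` {0<..<1}" using s01 by blast
        ultimately show False using IV[OF x(2)] by blast
      next
        case (Inr p)
        then obtain e' i where p: "v = Inr (e',i)" "(e',i) \<in> E \<times> {1..k}" using v by (auto simp: subdiv_V_def)
        show False
        proof (cases "e = e'")
          case True
          then have "s = t e i" using inj01[OF x(2) s01, of "t e i"] tin[of e i] p eq Inr_eq by force
          moreover have "i \<le> j \<or> Suc j \<le> i" by linarith
          ultimately show False using s tle[OF x(2), of i j] tle[OF x(2), of "Suc j" i] by auto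
        next
          case False
          moreover have "\<gamma> e s \<in> \<gamma> e' ` {0<..<1}" using Inr_int[OF p(2)] eq p by simp
          moreover have "\<gamma> e s \<in> \<gamma> e ` {0<..<1}" using s01 by blast
          moreover have "e' \<in> E" using p by auto
          ultimately show False using II[OF x(2), of e'] by blast
        qed
      qed
    qed
    show "simple_path (\<gamma>' x) \<and> path_image (\<gamma>' x) \<subseteq> X \<and>
        pathstart (\<gamma>' x) = \<phi>' (fst (?ends x)) \<and> pathfinish (\<gamma>' x) = \<phi>' (snd (?ends x)) \<and>
        \<gamma>' x ` {0<..<1} \<inter> \<phi>' ` ?V = {}" using a b c d by blast
  qed
  have disj: "\<forall>x\<in>?E. \<forall>y\<in>?E. x \<noteq> y \<longrightarrow> \<gamma>' x ` {0<..<1} \<inter> \<gamma>' y ` {0<..<1} = {}"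
  proof (intro ballI impI)
    fix x y assume "x \<in> ?E" "y \<in> ?E" "x \<noteq> y"
    then obtain e j where x: "x = (e,j)" "e \<in> E" "j \<le> k"
      by (auto simp: subdiv_E_def)
    obtain e' j' where y: "y = (e',j')" "e' \<in> E" "j' \<le> k"
      using \<open>y \<in> ?E\<close> by (auto simp: subdiv_E_def)
    show "\<gamma>' x ` {0<..<1} \<inter> \<gamma>' y ` {0<..<1} = {}"
    proof (rule ccontr)
      assume "\<gamma>' x ` {0<..<1} \<inter> \<gamma>' y ` {0<..<1} \<noteq> {}"
      then obtain s s' where s: "s \<in> {t e j<..<t e (Suc j)}" and s': "s' \<in> {t e' j'<..<t e' (Suc j')}"
        and eq: "\<gamma> e s = \<gamma> e' s'"
        using gint[OF x(2,3)] gint[OF y(2,3)] x y by force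
      have s01: "s \<in> {0<..<1}" using s intsub[OF x(2,3)] by auto
      have s01': "s' \<in> {0<..<1}" using s' intsub[OF y(2,3)] by auto
      show False
      proof (cases "e = e'")
        case True
        then have "s = s'" using inj01[OF x(2) s01, of s'] s01' eq by auto
        moreover have "j \<noteq> j'" using True \<open>x \<noteq> y\<close> x y by auto
        then have "Suc j \<le> j' \<or> Suc j' \<le> j" by linarith
        ultimately show False using s s' True tle[OF x(2), of "Suc j" j'] tle[OF x(2), of "Suc j'" j] by auto
      next
        case False
        moreover have "\<gamma> e s \<in> \<gamma> e ` {0<..<1}" using s01 by blast
        moreover have "\<gamma> e s \<in> \<gamma> e' ` {0<..<1}" using s01' eq by auto
        ultimately show False using II[OF x(2) y(2)] by blast
      qed
    qed
  qed
  have emb': "graph_embedding ?V ?E ?ends X \<phi>' \<gamma>'"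
    unfolding graph_embedding_def using VX' inj' edges disj by (intro conjI)
  have sing: "\<forall>q\<in>Q. q \<in> graph_image ?V ?E \<phi>' \<gamma>' \<longrightarrow> q \<in> \<phi>' ` ?V"
  proof (intro ballI impI)
    fix q assume qQ: "q \<in> Q" and qi: "q \<in> graph_image ?V ?E \<phi>' \<gamma>'"
    show "q \<in> \<phi>' ` ?V"
    proof (cases "q \<in> \<phi>' ` ?V")
      case False
      then obtain x where "x \<in> ?E" "q \<in> path_image (\<gamma>' x)" using qi unfolding graph_image_def by blast
      then obtain e j where x: "e \<in> E" "j \<le> k" "q \<in> path_image (\<gamma>' (e,j))" by (auto simp: subdiv_E_def)
      then obtain s where s0: "s \<in> {t e j..t e (Suc j)}" "q = \<gamma> e s"
        using gcl[OF x(1,2)] by blast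
      have "t e j \<in> {0..1}" "t e (Suc j) \<in> {0..1}" using t01[of e j] t01[of e "Suc j"] x by auto
      then have s: "s \<in> {0..1}" "q = \<gamma> e s" using s0 by auto
      have "s = 0 \<or> s = 1 \<or> s \<in> {0<..<1}" using s by auto
      then show ?thesis
      proof (elim disjE)
        assume "s = 0"
        then have "q = \<phi>' (Inl (fst (ends e)))" using s st[OF x(1)] by (simp add: \<phi>'_def)
        then show ?thesis using endsV[OF x(1)] by (auto simp: subdiv_V_def)
      next
        assume "s = 1"
        then have "q = \<phi>' (Inl (snd (ends e)))" using s fi[OF x(1)] by (simp add: \<phi>'_def)
        then show ?thesis using endsV[OF x(1)] by (auto simp: subdiv_V_def)
      next
        assume "s \<in> {0<..<1}"
        then have "s \<in> S e" using s qQ by (auto simp: S_def)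
        then obtain i where i: "i \<in> {1..k}" "s = t e i" using t[OF x(1)] by auto
        then have "q = \<phi>' (Inr (e,i))" using s Inr_eq by simp
        then show ?thesis using i x(1) by (auto simp: subdiv_V_def)
      qed
    qed
  qed
  show ?thesis using emb' sing by blast
qed



primrec jn :: "('e \<times> nat \<Rightarrow> real \<Rightarrow> 'x::topological_space) \<Rightarrow> nat \<Rightarrow> 'e \<Rightarrow> nat \<Rightarrow> real \<Rightarrow> 'x" where
  "jn g k e 0 = g (e, k)"
| "jn g k e (Suc n) = g (e, k - Suc n) +++ jn g k e n"

lemma subdiv_pt_eq:
  assumes "a \<le> Suc k" "b \<le> Suc k" "subdiv_pt ends k e a = subdiv_pt ends k e b"
  shows "a = b \<or> (a = 0 \<and> b = Suc k) \<or> (a = Suc k \<and> b = 0)"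
  using assms by (auto simp: subdiv_pt_def split: if_splits)

lemma backward:
  fixes \<phi>' :: "'a + 'e \<times> nat \<Rightarrow> 'x::topological_space"
  assumes G: "graph V E ends"
    and emb: "graph_embedding (subdiv_V V E k) (subdiv_E E k) (subdiv_ends ends k) X \<phi>' \<gamma>'"
  shows "\<exists>\<phi> \<gamma>. graph_embedding V E ends X \<phi> \<gamma>"
proof -
  let ?V = "subdiv_V V E k" and ?E = "subdiv_E E k" and ?ends = "subdiv_ends ends k"
  have VX: "\<phi>' ` ?V \<subseteq> X" and injV: "inj_on \<phi>' ?V"
    and sp: "\<And>x. x \<in> ?E \<Longrightarrow> simple_path (\<gamma>' x)"
    and piX: "\<And>x. x \<in> ?E \<Longrightarrow> path_image (\<gamma>' x) \<subseteq> X"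
    and st: "\<And>x. x \<in> ?E \<Longrightarrow> pathstart (\<gamma>' x) = \<phi>' (fst (?ends x))"
    and fi: "\<And>x. x \<in> ?E \<Longrightarrow> pathfinish (\<gamma>' x) = \<phi>' (snd (?ends x))"
    and IV: "\<And>x. x \<in> ?E \<Longrightarrow> \<gamma>' x ` {0<..<1} \<inter> \<phi>' ` ?V = {}"
    and II: "\<And>x y. x \<in> ?E \<Longrightarrow> y \<in> ?E \<Longrightarrow> x \<noteq> y \<Longrightarrow> \<gamma>' x ` {0<..<1} \<inter> \<gamma>' y ` {0<..<1} = {}"
  proof -
    note E = emb[unfolded graph_embedding_def]
    have E3: "\<forall>x\<in>?E. simple_path (\<gamma>' x) \<and> path_image (\<gamma>' x) \<subseteq> X \<and>
        pathstart (\<gamma>' x) = \<phi>' (fst (?ends x)) \<and> pathfinish (\<gamma>' x) = \<phi>' (snd (?ends x)) \<and>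
        \<gamma>' x ` {0<..<1} \<inter> \<phi>' ` ?V = {}" using E by (elim conjE)
    show "\<phi>' ` ?V \<subseteq> X" using E by (elim conjE)
    show "inj_on \<phi>' ?V" using E by (elim conjE)
    show "\<And>x. x \<in> ?E \<Longrightarrow> simple_path (\<gamma>' x)" using E3 by blast
    show "\<And>x. x \<in> ?E \<Longrightarrow> path_image (\<gamma>' x) \<subseteq> X" using E3 by blast
    show "\<And>x. x \<in> ?E \<Longrightarrow> pathstart (\<gamma>' x) = \<phi>' (fst (?ends x))" using E3 by blast
    show "\<And>x. x \<in> ?E \<Longrightarrow> pathfinish (\<gamma>' x) = \<phi>' (snd (?ends x))" using E3 by blast
    show "\<And>x. x \<in> ?E \<Longrightarrow> \<gamma>' x ` {0<..<1} \<inter> \<phi>' ` ?V = {}" using E3 by blast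
    show "\<And>x y. x \<in> ?E \<Longrightarrow> y \<in> ?E \<Longrightarrow> x \<noteq> y \<Longrightarrow> \<gamma>' x ` {0<..<1} \<inter> \<gamma>' y ` {0<..<1} = {}"
    proof -
      fix x y assume "x \<in> ?E" "y \<in> ?E" "x \<noteq> y"
      moreover have "\<forall>x\<in>?E. \<forall>y\<in>?E. x \<noteq> y \<longrightarrow> \<gamma>' x ` {0<..<1} \<inter> \<gamma>' y ` {0<..<1} = {}"
        using E by (elim conjE)
      ultimately show "\<gamma>' x ` {0<..<1} \<inter> \<gamma>' y ` {0<..<1} = {}" by blast
    qed
  qed
  have endsV: "\<And>e. e \<in> E \<Longrightarrow> fst (ends e) \<in> V \<and> snd (ends e) \<in> V" using G by (auto simp: graph_def)
  let ?pt = "subdiv_pt ends k"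
  have ptV: "\<And>e j. e \<in> E \<Longrightarrow> j \<le> Suc k \<Longrightarrow> ?pt e j \<in> ?V"
  proof -
    fix e and j :: nat assume e: "e \<in> E" and j: "j \<le> Suc k"
    have ev: "fst (ends e) \<in> V" "snd (ends e) \<in> V" using endsV[OF e] by auto
    consider "j = 0" | "j = Suc k" | "1 \<le> j" "j \<le> k" using j by linarith
    then show "?pt e j \<in> ?V"
    proof cases
      case 1 then show ?thesis using ev by (simp add: subdiv_pt_simps subdiv_V_def)
    next
      case 2 then show ?thesis using ev by (simp add: subdiv_pt_simps subdiv_V_def)
    next
      case 3 then show ?thesis using e by (simp add: subdiv_pt_simps subdiv_V_def)
    qed
  qed
  have inE: "\<And>e j. e \<in> E \<Longrightarrow> j \<le> k \<Longrightarrow> (e, j) \<in> ?E" by (simp add: subdiv_E_def)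
  have endsE: "\<And>e j. ?ends (e, j) = (?pt e j, ?pt e (Suc j))" by (simp add: subdiv_ends_def)
  have phieq: "\<And>e a b. e \<in> E \<Longrightarrow> a \<le> Suc k \<Longrightarrow> b \<le> Suc k \<Longrightarrow> \<phi>' (?pt e a) = \<phi>' (?pt e b) \<Longrightarrow>
      a = b \<or> (a = 0 \<and> b = Suc k) \<or> (a = Suc k \<and> b = 0)"
  proof -
    fix e and a b :: nat assume h: "e \<in> E" "a \<le> Suc k" "b \<le> Suc k" "\<phi>' (?pt e a) = \<phi>' (?pt e b)"
    have "?pt e a = ?pt e b" by (rule inj_onD[OF injV h(4) ptV[OF h(1,2)] ptV[OF h(1,3)]])
    then show "a = b \<or> (a = 0 \<and> b = Suc k) \<or> (a = Suc k \<and> b = 0)"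
      by (rule subdiv_pt_eq[OF h(2,3)])
  qed
  have st': "\<And>e j. e \<in> E \<Longrightarrow> j \<le> k \<Longrightarrow> pathstart (\<gamma>' (e,j)) = \<phi>' (?pt e j)"
  proof -
    fix e and j :: nat assume "e \<in> E" "j \<le> k"
    then have "(e,j) \<in> ?E" by (rule inE)
    from st[OF this] show "pathstart (\<gamma>' (e,j)) = \<phi>' (?pt e j)" by (simp only: endsE fst_conv)
  qed
  have fi': "\<And>e j. e \<in> E \<Longrightarrow> j \<le> k \<Longrightarrow> pathfinish (\<gamma>' (e,j)) = \<phi>' (?pt e (Suc j))"
  proof -
    fix e and j :: nat assume "e \<in> E" "j \<le> k"
    then have "(e,j) \<in> ?E" by (rule inE)
    from fi[OF this] show "pathfinish (\<gamma>' (e,j)) = \<phi>' (?pt e (Suc j))" by (simp only: endsE snd_conv)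
  qed
  have pimg: "\<And>e j. e \<in> E \<Longrightarrow> j \<le> k \<Longrightarrow>
      path_image (\<gamma>' (e,j)) = \<gamma>' (e,j) ` {0<..<1} \<union> {\<phi>' (?pt e j), \<phi>' (?pt e (Suc j))}"
  proof -
    fix e and j :: nat assume "e \<in> E" "j \<le> k"
    then show "path_image (\<gamma>' (e,j)) = \<gamma>' (e,j) ` {0<..<1} \<union> {\<phi>' (?pt e j), \<phi>' (?pt e (Suc j))}"
      using path_image_split[of "\<gamma>' (e,j)"] st'[OF \<open>e \<in> E\<close> \<open>j \<le> k\<close>] fi'[OF \<open>e \<in> E\<close> \<open>j \<le> k\<close>] by simp
  qed
  define U where "U e m = (\<Union>j\<in>{m..k}. \<gamma>' (e,j) ` {0<..<1})" for e m
  define P where "P e n \<longleftrightarrow>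
      path (jn \<gamma>' k e n) \<and> pathstart (jn \<gamma>' k e n) = \<phi>' (?pt e (k - n)) \<and>
      pathfinish (jn \<gamma>' k e n) = \<phi>' (?pt e (Suc k)) \<and>
      jn \<gamma>' k e n ` {0<..<1} \<subseteq> U e (k - n) \<union> \<phi>' ` (?pt e ` {Suc (k - n)..k}) \<and>
      path_image (jn \<gamma>' k e n) \<subseteq> U e (k - n) \<union> \<phi>' ` (?pt e ` {k - n..Suc k}) \<and>
      simple_path (jn \<gamma>' k e n) \<and> (?pt e (k - n) \<noteq> ?pt e (Suc k) \<longrightarrow> arc (jn \<gamma>' k e n))" for e n
  have ind: "\<And>e n. e \<in> E \<Longrightarrow> n \<le> k \<Longrightarrow> P e n"
  proof -
    fix e n assume e: "e \<in> E"
    show "n \<le> k \<Longrightarrow> P e n"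
    proof (induction n)
      case 0
      have ek: "(e, k) \<in> ?E" using inE[OF e] by simp
      have s: "simple_path (\<gamma>' (e,k))" using sp[OF ek] .
      have a1: "pathstart (\<gamma>' (e,k)) = \<phi>' (?pt e k)" using st'[OF e] by simp
      have a2: "pathfinish (\<gamma>' (e,k)) = \<phi>' (?pt e (Suc k))" using fi'[OF e] by simp
      have a3: "\<gamma>' (e,k) ` {0<..<1} \<subseteq> U e k" by (auto simp: U_def)
      have a4: "path_image (\<gamma>' (e,k)) \<subseteq> U e k \<union> \<phi>' ` (?pt e ` {k..Suc k})"
        using pimg[OF e, of k] a3 by auto
      have a5: "?pt e k \<noteq> ?pt e (Suc k) \<longrightarrow> arc (\<gamma>' (e,k))"
      proof
        assume "?pt e k \<noteq> ?pt e (Suc k)"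
        then have "\<phi>' (?pt e k) \<noteq> \<phi>' (?pt e (Suc k))"
          using inj_onD[OF injV _ ptV[OF e, of k] ptV[OF e, of "Suc k"]] by auto
        then show "arc (\<gamma>' (e,k))" using simple_path_imp_arc[OF s] a1 a2 by simp
      qed
      show ?case unfolding P_def using s simple_path_imp_path[OF s] a1 a2 a3 a4 a5 by simp
    next
      case (Suc n)
      have nk: "n \<le> k" using Suc.prems by simp
      have IH: "P e n" using Suc.IH[OF nk] .
      define m' where "m' = k - Suc n"
      have mm: "k - n = Suc m'" using Suc.prems by (simp add: m'_def)
      have m'k: "m' < k" using Suc.prems by (simp add: m'_def)
      define g1 where "g1 = \<gamma>' (e, m')"
      define g2 where "g2 = jn \<gamma>' k e n"
      have jnS: "jn \<gamma>' k e (Suc n) = g1 +++ g2" by (simp add: g1_def g2_def m'_def)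
      have kSn: "k - Suc n = m'" by (simp add: m'_def)
      have em: "(e, m') \<in> ?E" using inE[OF e] m'k by simp
      have g1s: "pathstart g1 = \<phi>' (?pt e m')" using st'[OF e] m'k by (simp add: g1_def)
      have g1f: "pathfinish g1 = \<phi>' (?pt e (Suc m'))" using fi'[OF e] m'k by (simp add: g1_def)
      have IH': "path g2" "pathstart g2 = \<phi>' (?pt e (Suc m'))" "pathfinish g2 = \<phi>' (?pt e (Suc k))"
        "g2 ` {0<..<1} \<subseteq> U e (Suc m') \<union> \<phi>' ` (?pt e ` {Suc (Suc m')..k})"
        "path_image g2 \<subseteq> U e (Suc m') \<union> \<phi>' ` (?pt e ` {Suc m'..Suc k})"
        "simple_path g2" "?pt e (Suc m') \<noteq> ?pt e (Suc k) \<longrightarrow> arc g2"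
        using IH unfolding P_def g2_def mm by blast+
      have arc1: "arc g1"
      proof -
        have "\<phi>' (?pt e m') \<noteq> \<phi>' (?pt e (Suc m'))"
        proof
          assume "\<phi>' (?pt e m') = \<phi>' (?pt e (Suc m'))"
          then show False using phieq[OF e, of m' "Suc m'"] m'k by auto
        qed
        then show ?thesis using simple_path_imp_arc[OF sp[OF em]] g1s g1f by (simp add: g1_def)
      qed
      have arc2: "arc g2"
      proof -
        have "?pt e (Suc m') \<noteq> ?pt e (Suc k)"
        proof
          assume "?pt e (Suc m') = ?pt e (Suc k)"
          then show False using subdiv_pt_eq[of "Suc m'" k "Suc k" ends e] m'k by auto
        qed
        then show ?thesis using IH'(7) by blast
      qed
      have Jdisj: "g1 ` {0<..<1} \<inter> path_image g2 = {}"
      proof (rule ccontr)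
        assume "g1 ` {0<..<1} \<inter> path_image g2 \<noteq> {}"
        then obtain y where y1: "y \<in> g1 ` {0<..<1}" and y2: "y \<in> path_image g2" by blast
        have "y \<in> U e (Suc m') \<or> y \<in> \<phi>' ` (?pt e ` {Suc m'..Suc k})" using y2 IH'(5) by blast
        then show False
        proof
          assume "y \<in> U e (Suc m')"
          then obtain j where j: "j \<in> {Suc m'..k}" "y \<in> \<gamma>' (e,j) ` {0<..<1}" by (auto simp: U_def)
          have ej: "(e, j) \<in> ?E" using inE[OF e] j by simp
          moreover have ne: "(e, m') \<noteq> (e, j)" using j by auto
          have "\<gamma>' (e, m') ` {0<..<1} \<inter> \<gamma>' (e, j) ` {0<..<1} = {}" by (rule II[OF em ej ne])
          then show False using y1 j unfolding g1_def by blast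
        next
          assume "y \<in> \<phi>' ` (?pt e ` {Suc m'..Suc k})"
          then obtain i where i: "i \<in> {Suc m'..Suc k}" "y = \<phi>' (?pt e i)" by blast
          have "?pt e i \<in> ?V" using ptV[OF e] i by simp
          then show False using IV[OF em] y1 i unfolding g1_def by blast
        qed
      qed
      have pi1: "path_image g1 = g1 ` {0<..<1} \<union> {\<phi>' (?pt e m'), \<phi>' (?pt e (Suc m'))}"
      proof -
        have "m' \<le> k" using m'k by simp
        from pimg[OF e this] show ?thesis unfolding g1_def .
      qed
      have int12: "path_image g1 \<inter> path_image g2 \<subseteq> {pathstart g1, pathstart g2}"
      proof
        fix y assume y: "y \<in> path_image g1 \<inter> path_image g2"
        then have "y \<in> g1 ` {0<..<1} \<or> y = \<phi>' (?pt e m') \<or> y = \<phi>' (?pt e (Suc m'))"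
          unfolding pi1 by blast
        moreover have "y \<notin> g1 ` {0<..<1}" using y Jdisj by blast
        ultimately show "y \<in> {pathstart g1, pathstart g2}" using g1s IH'(2) by auto
      qed
      have st1: "pathstart g1 \<in> path_image g2 \<Longrightarrow> pathstart g1 = pathfinish g2"
      proof -
        assume a: "pathstart g1 \<in> path_image g2"
        have "pathstart g1 \<in> U e (Suc m') \<or> pathstart g1 \<in> \<phi>' ` (?pt e ` {Suc m'..Suc k})"
          using a IH'(5) by blast
        then show "pathstart g1 = pathfinish g2"
        proof
          assume "pathstart g1 \<in> U e (Suc m')"
          then obtain j where j: "j \<in> {Suc m'..k}" "pathstart g1 \<in> \<gamma>' (e,j) ` {0<..<1}" by (auto simp: U_def)
          have ej: "(e, j) \<in> ?E" using inE[OF e] j by simp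
          have "?pt e m' \<in> ?V" using ptV[OF e] m'k by simp
          then show ?thesis using IV[OF ej] j g1s by blast
        next
          assume "pathstart g1 \<in> \<phi>' ` (?pt e ` {Suc m'..Suc k})"
          then obtain i where i: "i \<in> {Suc m'..Suc k}" "\<phi>' (?pt e m') = \<phi>' (?pt e i)" using g1s by auto
          then have "m' = i \<or> (m' = 0 \<and> i = Suc k) \<or> (m' = Suc k \<and> i = 0)"
            using phieq[OF e, of m' i] m'k by auto
          then have "i = Suc k" using i m'k by auto
          then show ?thesis using i g1s IH'(3) by simp
        qed
      qed
      have fs: "pathfinish g1 = pathstart g2" using g1f IH'(2) by simp
      have js: "simple_path (g1 +++ g2) \<and> (pathstart g1 \<noteq> pathfinish g2 \<longrightarrow> arc (g1 +++ g2))"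
        using join_simple[OF arc1 arc2 fs int12 st1] .
      have b1: "path (g1 +++ g2)" using js simple_path_imp_path by blast
      have b2: "pathstart (g1 +++ g2) = \<phi>' (?pt e m')" using g1s by simp
      have b3: "pathfinish (g1 +++ g2) = \<phi>' (?pt e (Suc k))" using IH'(3) by simp
      have Um: "U e (Suc m') \<subseteq> U e m'" unfolding U_def by (intro UN_mono) auto
      have g1U: "g1 ` {0<..<1} \<subseteq> U e m'"
      proof -
        have "m' \<in> {m'..k}" using m'k by simp
        then show ?thesis unfolding U_def g1_def by (rule UN_upper)
      qed
      have b4: "(g1 +++ g2) ` {0<..<1} \<subseteq> U e m' \<union> \<phi>' ` (?pt e ` {Suc m'..k})"
      proof -
        have eq: "(g1 +++ g2) ` {0<..<1} = g1 ` {0<..<1} \<union> {g2 0} \<union> g2 ` {0<..<1}"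
          using join_interior[OF fs] .
        have "g2 0 = \<phi>' (?pt e (Suc m'))" using IH'(2) unfolding pathstart_def .
        moreover have "Suc m' \<in> {Suc m'..k}" using m'k by simp
        ultimately have h1: "g2 0 \<in> \<phi>' ` (?pt e ` {Suc m'..k})" by blast
        have h2: "\<phi>' ` (?pt e ` {Suc (Suc m')..k}) \<subseteq> \<phi>' ` (?pt e ` {Suc m'..k})"
          by (intro image_mono) auto
        have h3: "g2 ` {0<..<1} \<subseteq> U e m' \<union> \<phi>' ` (?pt e ` {Suc m'..k})"
          using IH'(4) Um h2 by blast
        show ?thesis unfolding eq using g1U h1 h3 by blast
      qed
      have b5: "path_image (g1 +++ g2) \<subseteq> U e m' \<union> \<phi>' ` (?pt e ` {m'..Suc k})"
      proof -
        have eq: "path_image (g1 +++ g2) = path_image g1 \<union> path_image g2" using path_image_join[OF fs] .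
        have h1: "\<phi>' ` (?pt e ` {Suc m'..Suc k}) \<subseteq> \<phi>' ` (?pt e ` {m'..Suc k})"
          by (intro image_mono) auto
        have "m' \<in> {m'..Suc k}" "Suc m' \<in> {m'..Suc k}" using m'k by auto
        then have h2: "\<phi>' (?pt e m') \<in> \<phi>' ` (?pt e ` {m'..Suc k})"
          "\<phi>' (?pt e (Suc m')) \<in> \<phi>' ` (?pt e ` {m'..Suc k})" by blast+
        have h3: "path_image g1 \<subseteq> U e m' \<union> \<phi>' ` (?pt e ` {m'..Suc k})"
          unfolding pi1 using g1U h2 by blast
        have h4: "path_image g2 \<subseteq> U e m' \<union> \<phi>' ` (?pt e ` {m'..Suc k})"
          using IH'(5) Um h1 by blast
        show ?thesis unfolding eq using h3 h4 by blast
      qed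
      have b6: "?pt e m' \<noteq> ?pt e (Suc k) \<longrightarrow> arc (g1 +++ g2)"
      proof
        assume "?pt e m' \<noteq> ?pt e (Suc k)"
        then have "\<phi>' (?pt e m') \<noteq> \<phi>' (?pt e (Suc k))"
          using inj_onD[OF injV _ ptV[OF e, of m'] ptV[OF e, of "Suc k"]] m'k by auto
        then have "pathstart g1 \<noteq> pathfinish g2" using g1s IH'(3) by simp
        then show "arc (g1 +++ g2)" using js by blast
      qed
      have b7: "simple_path (g1 +++ g2)" using js by blast
      show ?case unfolding P_def jnS kSn by (intro conjI b1 b2 b3 b4 b5 b6 b7)
    qed
  qed
  define \<phi> where "\<phi> = \<phi>' \<circ> Inl"
  define \<gamma> where "\<gamma> e = jn \<gamma>' k e k" for e
  have Pk: "\<And>e. e \<in> E \<Longrightarrow> P e k" using ind[OF _ order_refl] .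
  have InlV: "Inl ` V \<subseteq> ?V" by (auto simp: subdiv_V_def)
  have c1: "\<phi> ` V \<subseteq> X" using VX InlV unfolding \<phi>_def by auto
  have c2: "inj_on \<phi> V" unfolding \<phi>_def
    using comp_inj_on[of Inl V \<phi>'] inj_on_subset[OF injV InlV] by simp
  have Uint: "\<And>e y. e \<in> E \<Longrightarrow> y \<in> \<gamma> e ` {0<..<1} \<Longrightarrow>
      (\<exists>j. j \<le> k \<and> y \<in> \<gamma>' (e,j) ` {0<..<1}) \<or> (\<exists>i. 1 \<le> i \<and> i \<le> k \<and> y = \<phi>' (Inr (e,i)))"
  proof -
    fix e y assume e: "e \<in> E" and y: "y \<in> \<gamma> e ` {0<..<1}"
    have "jn \<gamma>' k e k ` {0<..<1} \<subseteq> U e (k - k) \<union> \<phi>' ` (?pt e ` {Suc (k - k)..k})"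
      using Pk[OF e] unfolding P_def by blast
    then have "y \<in> U e 0 \<union> \<phi>' ` (?pt e ` {Suc 0..k})" using y unfolding \<gamma>_def by (simp only: diff_self_eq_0) blast
    then show "(\<exists>j. j \<le> k \<and> y \<in> \<gamma>' (e,j) ` {0<..<1}) \<or> (\<exists>i. 1 \<le> i \<and> i \<le> k \<and> y = \<phi>' (Inr (e,i)))"
    proof
      assume "y \<in> U e 0" then show ?thesis by (auto simp: U_def)
    next
      assume "y \<in> \<phi>' ` (?pt e ` {Suc 0..k})"
      then obtain i where "i \<in> {Suc 0..k}" "y = \<phi>' (?pt e i)" by blast
      then show ?thesis by (auto simp: subdiv_pt_simps)
    qed
  qed
  have Inr_V: "\<And>e i. e \<in> E \<Longrightarrow> 1 \<le> i \<Longrightarrow> i \<le> k \<Longrightarrow> Inr (e,i) \<in> ?V" by (auto simp: subdiv_V_def)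
  have c3: "\<forall>e\<in>E. simple_path (\<gamma> e) \<and> path_image (\<gamma> e) \<subseteq> X \<and>
        pathstart (\<gamma> e) = \<phi> (fst (ends e)) \<and> pathfinish (\<gamma> e) = \<phi> (snd (ends e)) \<and>
        \<gamma> e ` {0<..<1} \<inter> \<phi> ` V = {}"
  proof
    fix e assume e: "e \<in> E"
    have PE: "P e k" using Pk[OF e] .
    have d1: "simple_path (\<gamma> e)" using PE unfolding P_def \<gamma>_def by blast
    have d2: "path_image (\<gamma> e) \<subseteq> X"
    proof
      fix y assume "y \<in> path_image (\<gamma> e)"
      moreover have "path_image (jn \<gamma>' k e k) \<subseteq> U e (k - k) \<union> \<phi>' ` (?pt e ` {k - k..Suc k})"
        using PE unfolding P_def by blast
      ultimately have "y \<in> U e 0 \<union> \<phi>' ` (?pt e ` {0..Suc k})" unfolding \<gamma>_def by auto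
      then show "y \<in> X"
      proof
        assume "y \<in> U e 0"
        then obtain j where j: "j \<le> k" "y \<in> \<gamma>' (e,j) ` {0<..<1}" by (auto simp: U_def)
        then have "y \<in> path_image (\<gamma>' (e,j))" using pimg[OF e j(1)] by blast
        then show "y \<in> X" using piX[OF inE[OF e j(1)]] by blast
      next
        assume "y \<in> \<phi>' ` (?pt e ` {0..Suc k})"
        then obtain i where "i \<le> Suc k" "y = \<phi>' (?pt e i)" by auto
        then show "y \<in> X" using ptV[OF e] VX by blast
      qed
    qed
    have d3: "pathstart (\<gamma> e) = \<phi> (fst (ends e))"
      using PE unfolding P_def \<gamma>_def \<phi>_def by (simp add: subdiv_pt_simps)
    have d4: "pathfinish (\<gamma> e) = \<phi> (snd (ends e))"
      using PE unfolding P_def \<gamma>_def \<phi>_def by (simp add: subdiv_pt_simps)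
    have d5: "\<gamma> e ` {0<..<1} \<inter> \<phi> ` V = {}"
    proof (rule ccontr)
      assume "\<gamma> e ` {0<..<1} \<inter> \<phi> ` V \<noteq> {}"
      then obtain y where y: "y \<in> \<gamma> e ` {0<..<1}" and yV: "y \<in> \<phi> ` V" by blast
      then obtain a where a: "a \<in> V" "y = \<phi>' (Inl a)" unfolding \<phi>_def by auto
      have aV: "Inl a \<in> ?V" using a InlV by auto
      from Uint[OF e y] show False
      proof
        assume "\<exists>j. j \<le> k \<and> y \<in> \<gamma>' (e,j) ` {0<..<1}"
        then obtain j where j: "j \<le> k" "y \<in> \<gamma>' (e,j) ` {0<..<1}" by blast
        then show False using IV[OF inE[OF e j(1)]] aV a by blast
      next
        assume "\<exists>i. 1 \<le> i \<and> i \<le> k \<and> y = \<phi>' (Inr (e,i))"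
        then obtain i where i: "1 \<le> i" "i \<le> k" "y = \<phi>' (Inr (e,i))" by blast
        have "Inr (e,i) = Inl a" using inj_onD[OF injV _ Inr_V[OF e i(1,2)] aV] i a by simp
        then show False by simp
      qed
    qed
    show "simple_path (\<gamma> e) \<and> path_image (\<gamma> e) \<subseteq> X \<and>
        pathstart (\<gamma> e) = \<phi> (fst (ends e)) \<and> pathfinish (\<gamma> e) = \<phi> (snd (ends e)) \<and>
        \<gamma> e ` {0<..<1} \<inter> \<phi> ` V = {}" using d1 d2 d3 d4 d5 by blast
  qed
  have c4: "\<forall>e\<in>E. \<forall>e'\<in>E. e \<noteq> e' \<longrightarrow> \<gamma> e ` {0<..<1} \<inter> \<gamma> e' ` {0<..<1} = {}"
  proof (intro ballI impI)
    fix e e' assume e: "e \<in> E" and e': "e' \<in> E" and ne: "e \<noteq> e'"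
    show "\<gamma> e ` {0<..<1} \<inter> \<gamma> e' ` {0<..<1} = {}"
    proof (rule ccontr)
      assume "\<gamma> e ` {0<..<1} \<inter> \<gamma> e' ` {0<..<1} \<noteq> {}"
      then obtain y where y: "y \<in> \<gamma> e ` {0<..<1}" and y': "y \<in> \<gamma> e' ` {0<..<1}" by blast
      from Uint[OF e y] show False
      proof
        assume "\<exists>j. j \<le> k \<and> y \<in> \<gamma>' (e,j) ` {0<..<1}"
        then obtain j where j: "j \<le> k" "y \<in> \<gamma>' (e,j) ` {0<..<1}" by blast
        from Uint[OF e' y'] show False
        proof
          assume "\<exists>j. j \<le> k \<and> y \<in> \<gamma>' (e',j) ` {0<..<1}"
          then obtain j' where j': "j' \<le> k" "y \<in> \<gamma>' (e',j') ` {0<..<1}" by blast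
          have "(e,j) \<noteq> (e',j')" using ne by simp
          then show False using II[OF inE[OF e j(1)] inE[OF e' j'(1)]] j j' by blast
        next
          assume "\<exists>i. 1 \<le> i \<and> i \<le> k \<and> y = \<phi>' (Inr (e',i))"
          then obtain i where i: "1 \<le> i" "i \<le> k" "y = \<phi>' (Inr (e',i))" by blast
          then show False using IV[OF inE[OF e j(1)]] Inr_V[OF e' i(1,2)] j by blast
        qed
      next
        assume "\<exists>i. 1 \<le> i \<and> i \<le> k \<and> y = \<phi>' (Inr (e,i))"
        then obtain i where i: "1 \<le> i" "i \<le> k" "y = \<phi>' (Inr (e,i))" by blast
        from Uint[OF e' y'] show False
        proof
          assume "\<exists>j. j \<le> k \<and> y \<in> \<gamma>' (e',j) ` {0<..<1}"
          then obtain j' where j': "j' \<le> k" "y \<in> \<gamma>' (e',j') ` {0<..<1}" by blast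
          then show False using IV[OF inE[OF e' j'(1)]] Inr_V[OF e i(1,2)] i by blast
        next
          assume "\<exists>i. 1 \<le> i \<and> i \<le> k \<and> y = \<phi>' (Inr (e',i))"
          then obtain i' where i': "1 \<le> i'" "i' \<le> k" "y = \<phi>' (Inr (e',i'))" by blast
          have "Inr (e,i) = Inr (e',i')" using inj_onD[OF injV _ Inr_V[OF e i(1,2)] Inr_V[OF e' i'(1,2)]] i i' by simp
          then show False using ne by simp
        qed
      qed
    qed
  qed
  have "graph_embedding V E ends X \<phi> \<gamma>" unfolding graph_embedding_def using c1 c2 c3 c4 by (intro conjI)
  then show ?thesis by blast
qed


theorem mainTheorem5:
  fixes C :: "'v set set"
    and V :: "'a set" and E :: "'e set" and ends :: "'e \<Rightarrow> 'a \<times> 'a"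
  assumes "two_complex C" and "\<not> has_3book C"
    and "graph V E ends"
  defines "k \<equiv> card (singular_nodes C)"
  shows "(\<exists>\<phi> \<gamma>. graph_embedding V E ends (realization C) \<phi> \<gamma>) \<longleftrightarrow>
         (\<exists>\<phi>' \<gamma>'. graph_embedding (subdiv_V V E k) (subdiv_E E k) (subdiv_ends ends k)
                      (realization C) \<phi>' \<gamma>' \<and>
            (\<forall>p\<in>singular_nodes C.
               node_point p \<in> graph_image (subdiv_V V E k) (subdiv_E E k) \<phi>' \<gamma>' \<longrightarrow>
               node_point p \<in> \<phi>' ` subdiv_V V E k))"
proof
  have fC: "finite C" using assms(1) by (simp add: two_complex_def)
  have "(\<lambda>p. {p}) ` nodes C \<subseteq> C" by (auto simp: nodes_def)
  then have "finite ((\<lambda>p. {p}) ` nodes C)" using fC finite_subset by blast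
  moreover have "inj_on (\<lambda>p. {p}) (nodes C)" by (auto simp: inj_on_def)
  ultimately have "finite (nodes C)" using finite_imageD by blast
  then have fS: "finite (singular_nodes C)" unfolding singular_nodes_def by simp
  let ?Q = "node_point ` singular_nodes C"
  have fQ: "finite ?Q" using fS by simp
  have cQ: "card ?Q \<le> k" unfolding k_def by (rule card_image_le[OF fS])
  assume "\<exists>\<phi> \<gamma>. graph_embedding V E ends (realization C) \<phi> \<gamma>"
  then obtain \<phi> \<gamma> where emb: "graph_embedding V E ends (realization C) \<phi> \<gamma>" by blast
  from forward[OF assms(3) emb fQ cQ]
  show "\<exists>\<phi>' \<gamma>'. graph_embedding (subdiv_V V E k) (subdiv_E E k) (subdiv_ends ends k)
                      (realization C) \<phi>' \<gamma>' \<and>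
            (\<forall>p\<in>singular_nodes C.
               node_point p \<in> graph_image (subdiv_V V E k) (subdiv_E E k) \<phi>' \<gamma>' \<longrightarrow>
               node_point p \<in> \<phi>' ` subdiv_V V E k)" by blast
next
  assume "\<exists>\<phi>' \<gamma>'. graph_embedding (subdiv_V V E k) (subdiv_E E k) (subdiv_ends ends k)
                      (realization C) \<phi>' \<gamma>' \<and>
            (\<forall>p\<in>singular_nodes C.
               node_point p \<in> graph_image (subdiv_V V E k) (subdiv_E E k) \<phi>' \<gamma>' \<longrightarrow>
               node_point p \<in> \<phi>' ` subdiv_V V E k)"
  then obtain \<phi>' \<gamma>' where emb: "graph_embedding (subdiv_V V E k) (subdiv_E E k) (subdiv_ends ends k)
                      (realization C) \<phi>' \<gamma>'" by blast
  show "\<exists>\<phi> \<gamma>. graph_embedding V E ends (realization C) \<phi> \<gamma>"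
    by (rule backward[OF assms(3) emb])
qed

end
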